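(* Let $A,B,B'$ be clusterings of $\{1,\dots,n\}$ with $1<k_A<n$, and let $B'$ be an $A$-consistent improvement of $B$. Then $\mathrm{NMI}(A,B')>\mathrm{NMI}(A,B)$ and $\mathrm{VI}(A,B')<\mathrm{VI}(A,B)$.
   Context: For a clustering $A=\{A_1,\dots,A_{k_A}\}$ of $\{1,\dots,n\}$, $H(A)=-\sum_i\frac{|A_i|}n\log\frac{|A_i|}n$; the joint entropy $H(A,B)$ is the Shannon entropy of the distribution $(p_{ij})$ with $p_{ij}=|A_i\cap B_j|/n$; the mutual information is $M(A,B)=H(A)+H(B)-H(A,B)$. $\mathrm{NMI}(A,B)=\frac{M(A,B)}{(H(A)+H(B))/2}$ and $\mathrm{VI}(A,B)=2H(A,B)-H(A)-H(B)$. A pair of distinct elements agrees in $A$ and $B$ if it lies in a common cluster in both or in neither; $B'$ is an $A$-consistent improvement of $B$ if $B'\neq B$ and every pair agreeing in $A$ and $B$ also agrees in $A$ and $B'$. *)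

theory Defs
  imports Complex_Main "HOL-Library.Disjoint_Sets"
begin

definition clustering :: "nat \<Rightarrow> nat set set \<Rightarrow> bool" where
  "clustering n A \<longleftrightarrow> partition_on {1..n} A"

definition ent_term :: "real \<Rightarrow> real" where
  "ent_term p = (if p = 0 then 0 else - p * ln p)"

definition H :: "nat \<Rightarrow> nat set set \<Rightarrow> real" where
  "H n A = (\<Sum>C\<in>A. ent_term (real (card C) / real n))"

definition H2 :: "nat \<Rightarrow> nat set set \<Rightarrow> nat set set \<Rightarrow> real" where
  "H2 n A B = (\<Sum>(C, D)\<in>A \<times> B. ent_term (real (card (C \<inter> D)) / real n))"

definition MI :: "nat \<Rightarrow> nat set set \<Rightarrow> nat set set \<Rightarrow> real" where
  "MI n A B = H n A + H n B - H2 n A B"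

definition NMI :: "nat \<Rightarrow> nat set set \<Rightarrow> nat set set \<Rightarrow> real" where
  "NMI n A B = MI n A B / ((H n A + H n B) / 2)"

definition VI :: "nat \<Rightarrow> nat set set \<Rightarrow> nat set set \<Rightarrow> real" where
  "VI n A B = 2 * H2 n A B - H n A - H n B"

definition same_cluster :: "nat set set \<Rightarrow> nat \<Rightarrow> nat \<Rightarrow> bool" where
  "same_cluster A x y \<longleftrightarrow> (\<exists>C\<in>A. x \<in> C \<and> y \<in> C)"

definition agrees :: "nat set set \<Rightarrow> nat set set \<Rightarrow> nat \<Rightarrow> nat \<Rightarrow> bool" where
  "agrees A B x y \<longleftrightarrow> (same_cluster A x y \<longleftrightarrow> same_cluster B x y)"

definition consistent_improvement ::
  "nat \<Rightarrow> nat set set \<Rightarrow> nat set set \<Rightarrow> nat set set \<Rightarrow> bool" where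
  "consistent_improvement n A B B' \<longleftrightarrow> B' \<noteq> B \<and>
     (\<forall>x\<in>{1..n}. \<forall>y\<in>{1..n}. x \<noteq> y \<longrightarrow> agrees A B x y \<longrightarrow> agrees A B' x y)"

end

theory Submission imports Defs begin

definition cl :: "nat set set \<Rightarrow> nat \<Rightarrow> nat set" where
  "cl P x = (THE C. C \<in> P \<and> x \<in> C)"

lemma part_uniq: "partition_on S P \<Longrightarrow> C \<in> P \<Longrightarrow> D \<in> P \<Longrightarrow> x \<in> C \<Longrightarrow> x \<in> D \<Longrightarrow> C = D"
  by (meson disjointD disjoint_iff partition_onD2)

lemma cl_eq: "partition_on S P \<Longrightarrow> C \<in> P \<Longrightarrow> x \<in> C \<Longrightarrow> cl P x = C"
  unfolding cl_def by (rule the_equality) (auto dest: part_uniq)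

lemma cl_in: assumes "partition_on S P" "x \<in> S" shows "cl P x \<in> P" "x \<in> cl P x"
proof -
  obtain C where "C \<in> P" "x \<in> C" using assms partition_onD1 by blast
  then show "cl P x \<in> P" "x \<in> cl P x" using cl_eq[OF assms(1)] by auto
qed

lemma cl_sub: "partition_on S P \<Longrightarrow> x \<in> S \<Longrightarrow> cl P x \<subseteq> S"
  using cl_in partition_onD1 by blast

lemma same_cl: "partition_on S P \<Longrightarrow> x \<in> S \<Longrightarrow> same_cluster P x y \<longleftrightarrow> y \<in> cl P x"
  unfolding same_cluster_def using cl_in cl_eq by metis

lemma sum_cl2:
  assumes A: "partition_on S A" and B: "partition_on S B" and fin: "finite S"
  shows "(\<Sum>x\<in>S. G (cl A x) (cl B x)) = (\<Sum>p\<in>A\<times>B. real (card (fst p \<inter> snd p)) * G (fst p) (snd p))"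
proof -
  have fA: "finite A" "finite B" using A B fin finite_elements by auto
  have "(\<Sum>x\<in>S. G (cl A x) (cl B x)) = (\<Sum>x\<in>S. \<Sum>p\<in>A\<times>B. if x \<in> fst p \<inter> snd p then G (fst p) (snd p) else 0)"
  proof (rule sum.cong[OF refl])
    fix x assume x: "x \<in> S"
    have "(\<Sum>p\<in>A\<times>B. if x \<in> fst p \<inter> snd p then G (fst p) (snd p) else 0)
        = (\<Sum>p\<in>A\<times>B. if p = (cl A x, cl B x) then G (fst p) (snd p) else 0)"
    proof (rule sum.cong[OF refl])
      fix p assume p: "p \<in> A \<times> B"
      obtain C D where pCD: "p = (C, D)" "C \<in> A" "D \<in> B" using p by auto
      have "x \<in> fst p \<inter> snd p \<longleftrightarrow> p = (cl A x, cl B x)"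
      proof
        assume "x \<in> fst p \<inter> snd p"
        then show "p = (cl A x, cl B x)" using pCD cl_eq[OF A, of C x] cl_eq[OF B, of D x] by simp
      next
        assume "p = (cl A x, cl B x)"
        then show "x \<in> fst p \<inter> snd p" using cl_in[OF A x] cl_in[OF B x] by simp
      qed
      then show "(if x \<in> fst p \<inter> snd p then G (fst p) (snd p) else 0) = (if p = (cl A x, cl B x) then G (fst p) (snd p) else 0)" by simp
    qed
    also have "\<dots> = G (cl A x) (cl B x)"
      using fA cl_in[OF A x] cl_in[OF B x] by (simp add: sum.delta')
    finally show "G (cl A x) (cl B x) = (\<Sum>p\<in>A\<times>B. if x \<in> fst p \<inter> snd p then G (fst p) (snd p) else 0)" by simp
  qed
  also have "\<dots> = (\<Sum>p\<in>A\<times>B. \<Sum>x\<in>S. if x \<in> fst p \<inter> snd p then G (fst p) (snd p) else 0)"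
    by (rule sum.swap)
  also have "\<dots> = (\<Sum>p\<in>A\<times>B. real (card (fst p \<inter> snd p)) * G (fst p) (snd p))"
  proof (rule sum.cong[OF refl])
    fix p assume p: "p \<in> A \<times> B"
    have sub: "fst p \<inter> snd p \<subseteq> S" using p partition_onD1[OF A] by auto
    have "(\<Sum>x\<in>S. if x \<in> fst p \<inter> snd p then G (fst p) (snd p) else 0) = (\<Sum>x\<in>{x\<in>S. x \<in> fst p \<inter> snd p}. G (fst p) (snd p))"
      by (simp only: sum.inter_filter[OF fin])
    also have "{x\<in>S. x \<in> fst p \<inter> snd p} = fst p \<inter> snd p" using sub by auto
    finally show "(\<Sum>x\<in>S. if x \<in> fst p \<inter> snd p then G (fst p) (snd p) else 0) = real (card (fst p \<inter> snd p)) * G (fst p) (snd p)" by simp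
  qed
  finally show ?thesis .
qed

lemma sum_cl:
  assumes A: "partition_on S A" and fin: "finite S"
  shows "(\<Sum>x\<in>S. G (cl A x)) = (\<Sum>C\<in>A. real (card C) * G C)"
proof -
  have fA: "finite A" using A fin finite_elements by auto
  have "(\<Sum>x\<in>S. G (cl A x)) = (\<Sum>x\<in>S. \<Sum>C\<in>A. if x \<in> C then G C else 0)"
  proof (rule sum.cong[OF refl])
    fix x assume x: "x \<in> S"
    have "(\<Sum>C\<in>A. if x \<in> C then G C else 0) = (\<Sum>C\<in>A. if C = cl A x then G C else 0)"
    proof (rule sum.cong[OF refl])
      fix C assume C: "C \<in> A"
      have "x \<in> C \<longleftrightarrow> C = cl A x"
        using C cl_eq[OF A, of C x] cl_in[OF A x] by auto
      then show "(if x \<in> C then G C else 0) = (if C = cl A x then G C else 0)" by simp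
    qed
    also have "\<dots> = G (cl A x)"
      using fA cl_in[OF A x] by (simp add: sum.delta')
    finally show "G (cl A x) = (\<Sum>C\<in>A. if x \<in> C then G C else 0)" by simp
  qed
  also have "\<dots> = (\<Sum>C\<in>A. \<Sum>x\<in>S. if x \<in> C then G C else 0)"
    by (rule sum.swap)
  also have "\<dots> = (\<Sum>C\<in>A. real (card C) * G C)"
  proof (rule sum.cong[OF refl])
    fix C assume p: "C \<in> A"
    have sub: "C \<subseteq> S" using p partition_onD1[OF A] by auto
    have "(\<Sum>x\<in>S. if x \<in> C then G C else 0) = (\<Sum>x\<in>{x\<in>S. x \<in> C}. G C)"
      by (simp only: sum.inter_filter[OF fin])
    also have "{x\<in>S. x \<in> C} = C" using sub by auto
    finally show "(\<Sum>x\<in>S. if x \<in> C then G C else 0) = real (card C) * G C" by simp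
  qed
  finally show ?thesis .
qed


lemma cl_of: "partition_on S P \<Longrightarrow> x \<in> S \<Longrightarrow> y \<in> cl P x \<Longrightarrow> cl P y = cl P x"
  using cl_eq cl_in by metis

lemma cl_finite: "partition_on S P \<Longrightarrow> finite S \<Longrightarrow> x \<in> S \<Longrightarrow> finite (cl P x)"
  using cl_sub finite_subset by metis

locale cimp =
  fixes S A B B'
  assumes A: "partition_on S A" and B: "partition_on S B" and B': "partition_on S B'"
    and cons: "\<forall>x\<in>S. \<forall>y\<in>S. x \<noteq> y \<longrightarrow> agrees A B x y \<longrightarrow> agrees A B' x y"
begin

lemma F1: assumes x: "x \<in> S" and y: "y \<in> cl A x \<inter> cl B x" shows "y \<in> cl B' x"
proof (cases "y = x")
  case True then show ?thesis using cl_in[OF B' x] by simp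
next
  case False
  have yS: "y \<in> S" using y cl_sub[OF A x] by auto
  have "agrees A B x y" using y same_cl[OF A x] same_cl[OF B x] unfolding agrees_def by auto
  then have "agrees A B' x y" using cons[rule_format, OF x yS False[symmetric]] by simp
  then show ?thesis using y same_cl[OF A x] same_cl[OF B' x] unfolding agrees_def by auto
qed

lemma K: assumes x: "x \<in> S" and y: "y \<in> cl B' x" "y \<notin> cl A x" shows "y \<in> cl B x"
proof -
  have yS: "y \<in> S" using y cl_sub[OF B' x] by auto
  have ne: "x \<noteq> y" using y cl_in[OF A x] by auto
  have "\<not> agrees A B' x y" using y same_cl[OF A x] same_cl[OF B' x] unfolding agrees_def by auto
  then have "\<not> agrees A B x y" using cons[rule_format, OF x yS ne] by blast
  then show ?thesis using y same_cl[OF A x] same_cl[OF B x] unfolding agrees_def by auto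
qed

lemma dich: assumes x: "x \<in> S" shows "cl B' x \<subseteq> cl A x \<or> cl B' x \<subseteq> cl B x"
proof (rule ccontr)
  assume "\<not> ?thesis"
  then obtain y z where y: "y \<in> cl B' x" "y \<notin> cl A x" and z: "z \<in> cl B' x" "z \<notin> cl B x" by blast
  have yB: "y \<in> cl B x" using K[OF x y] .
  have zA: "z \<in> cl A x" using K[OF x z(1)] z(2) by blast
  have yS: "y \<in> S" using y cl_sub[OF B' x] by auto
  have zy: "z \<in> cl B' y" using cl_of[OF B' x y(1)] z by simp
  have "z \<notin> cl A y"
  proof
    assume "z \<in> cl A y"
    then have "cl A z = cl A y" using cl_of[OF A yS] by simp
    moreover have "cl A z = cl A x" using cl_of[OF A x zA] .
    ultimately show False using y(2) cl_in[OF A yS] by simp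
  qed
  then have "z \<in> cl B y" using K[OF yS zy] by simp
  then show False using cl_of[OF B x yB] z(2) by simp
qed

end


lemma ent_nat: assumes "n > 0" shows "ent_term (real k / real n) = real k * ((ln (real n) - ln (real k)) / real n)"
proof (cases "k = 0")
  case True then show ?thesis by (simp add: ent_term_def)
next
  case False
  have l: "ln (real k / real n) = ln (real k) - ln (real n)" using assms False by (simp add: ln_div)
  have "ent_term (real k / real n) = - (real k / real n) * (ln (real k) - ln (real n))"
    using False assms l by (simp add: ent_term_def)
  also have "\<dots> = real k * ((ln (real n) - ln (real k)) / real n)" by (simp add: divide_simps algebra_simps)
  finally show ?thesis .
qed

lemma H_pt: assumes P: "partition_on {1..n} P" and n: "n > 0"
  shows "H n P = (\<Sum>x\<in>{1..n}. (ln (real n) - ln (real (card (cl P x)))) / real n)"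
proof -
  have "H n P = (\<Sum>C\<in>P. real (card C) * ((ln (real n) - ln (real (card C))) / real n))"
    unfolding H_def using ent_nat[OF n] by simp
  also have "\<dots> = (\<Sum>x\<in>{1..n}. (ln (real n) - ln (real (card (cl P x)))) / real n)"
    using sum_cl[OF P, of "\<lambda>C. (ln (real n) - ln (real (card C))) / real n"] by simp
  finally show ?thesis .
qed

lemma H2_pt: assumes A: "partition_on {1..n} A" and B: "partition_on {1..n} B" and n: "n > 0"
  shows "H2 n A B = (\<Sum>x\<in>{1..n}. (ln (real n) - ln (real (card (cl A x \<inter> cl B x)))) / real n)"
proof -
  have "H2 n A B = (\<Sum>p\<in>A\<times>B. real (card (fst p \<inter> snd p)) * ((ln (real n) - ln (real (card (fst p \<inter> snd p)))) / real n))"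
    unfolding H2_def using ent_nat[OF n] by (simp add: case_prod_unfold)
  also have "\<dots> = (\<Sum>x\<in>{1..n}. (ln (real n) - ln (real (card (cl A x \<inter> cl B x)))) / real n)"
    using sum_cl2[OF A B, of "\<lambda>C D. (ln (real n) - ln (real (card (C \<inter> D)))) / real n"] by simp
  finally show ?thesis .
qed

lemma card_sum: fixes A :: "nat set set" assumes A: "partition_on S A" and fin: "finite S"
  shows "(\<Sum>C\<in>A. real (card C)) = real (card S)"
  using sum_cl[OF A fin, of "\<lambda>C. 1"] by simp

lemma ln_strict: fixes s :: real assumes "0 < s" "s \<noteq> 1" shows "ln s < s - 1"
  using ln_le_minus_one[OF assms(1)] ln_eq_minus_one[OF assms(1)] assms(2) by fastforce


lemma gibbs:
  fixes A B :: "nat set set"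
  assumes A: "partition_on S A" and B: "partition_on S B" and fin: "finite S" and ne: "S \<noteq> {}"
  defines "T \<equiv> (\<lambda>x. ln (real (card S)) + ln (real (card (cl A x \<inter> cl B x))) - ln (real (card (cl A x))) - ln (real (card (cl B x))))"
  shows "0 \<le> (\<Sum>x\<in>S. T x) \<and> ((\<exists>x0\<in>S. cl B x0 \<subseteq> cl A x0 \<and> card (cl A x0) < card S) \<longrightarrow> 0 < (\<Sum>x\<in>S. T x))"
proof -
  define N where "N = real (card S)"
  have Npos: "N > 0" using fin ne by (simp add: N_def card_gt_0_iff)
  define s where "s = (\<lambda>x. real (card (cl A x)) * real (card (cl B x)) / (N * real (card (cl A x \<inter> cl B x))))"
  have pos: "real (card (cl A x)) > 0" "real (card (cl B x)) > 0" "real (card (cl A x \<inter> cl B x)) > 0" if x: "x \<in> S" for x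
  proof -
    have "x \<in> cl A x \<inter> cl B x" using cl_in[OF A x] cl_in[OF B x] by simp
    moreover have "finite (cl A x)" "finite (cl B x)" using cl_finite[OF A fin x] cl_finite[OF B fin x] .
    ultimately show "real (card (cl A x)) > 0" "real (card (cl B x)) > 0" "real (card (cl A x \<inter> cl B x)) > 0"
      by (auto simp: card_gt_0_iff)
  qed
  have spos: "s x > 0" if "x \<in> S" for x using pos[OF that] Npos by (simp add: s_def)
  have Ts: "T x = - ln (s x)" if x: "x \<in> S" for x
  proof -
    have "ln (s x) = ln (real (card (cl A x))) + ln (real (card (cl B x))) - (ln N + ln (real (card (cl A x \<inter> cl B x))))"
      unfolding s_def using pos[OF x] Npos by (simp add: ln_div ln_mult)
    then show ?thesis by (simp add: T_def N_def)
  qed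
  have Tge: "T x \<ge> 1 - s x" if "x \<in> S" for x using Ts[OF that] ln_le_minus_one[OF spos[OF that]] by simp
  have sum_s: "(\<Sum>x\<in>S. s x) \<le> N"
  proof -
    have "(\<Sum>x\<in>S. s x) = (\<Sum>p\<in>A\<times>B. real (card (fst p \<inter> snd p)) * (real (card (fst p)) * real (card (snd p)) / (N * real (card (fst p \<inter> snd p)))))"
      unfolding s_def using sum_cl2[OF A B fin, of "\<lambda>C D. real (card C) * real (card D) / (N * real (card (C \<inter> D)))"] by simp
    also have "\<dots> \<le> (\<Sum>p\<in>A\<times>B. real (card (fst p)) * real (card (snd p)) / N)"
    proof (rule sum_mono)
      fix p assume "p \<in> A \<times> B"
      show "real (card (fst p \<inter> snd p)) * (real (card (fst p)) * real (card (snd p)) / (N * real (card (fst p \<inter> snd p)))) \<le> real (card (fst p)) * real (card (snd p)) / N"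
        using Npos by (cases "card (fst p \<inter> snd p) = 0") (auto simp: field_simps)
    qed
    also have "\<dots> = (\<Sum>C\<in>A. real (card C)) * (\<Sum>D\<in>B. real (card D)) / N"
      by (simp add: sum_product sum.cartesian_product case_prod_unfold sum_divide_distrib)
    also have "\<dots> = N" using card_sum[OF A fin] card_sum[OF B fin] Npos by (simp add: N_def)
    finally show ?thesis .
  qed
  have "(\<Sum>x\<in>S. 1 - s x) = N - (\<Sum>x\<in>S. s x)" by (simp add: sum_subtractf N_def)
  also have "\<dots> \<ge> 0" using sum_s by simp
  finally have base: "(\<Sum>x\<in>S. 1 - s x) \<ge> 0" .
  have le: "(\<Sum>x\<in>S. 1 - s x) \<le> (\<Sum>x\<in>S. T x)" using Tge by (intro sum_mono) auto
  have strict: "0 < (\<Sum>x\<in>S. T x)" if ex: "\<exists>x0\<in>S. cl B x0 \<subseteq> cl A x0 \<and> card (cl A x0) < card S"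
  proof -
    obtain x0 where x0: "x0 \<in> S" "cl B x0 \<subseteq> cl A x0" "card (cl A x0) < card S" using ex by blast
    have "cl A x0 \<inter> cl B x0 = cl B x0" using x0 by blast
    then have "s x0 = real (card (cl A x0)) / N" using pos[OF x0(1)] Npos by (simp add: s_def)
    then have "s x0 < 1" using x0(3) Npos by (simp add: N_def)
    then have "T x0 > 1 - s x0" using Ts[OF x0(1)] ln_strict[OF spos[OF x0(1)]] by simp
    then have "(\<Sum>x\<in>S. 1 - s x) < (\<Sum>x\<in>S. T x)"
      using Tge x0(1) fin by (intro sum_strict_mono_ex1) auto
    then show ?thesis using base by simp
  qed
  show ?thesis using base le strict by linarith
qed


lemma frac_aux: fixes X Y nr :: real assumes "nr > 0"
  shows "(X/nr)/((Y/nr)/2) = 2 * X / Y"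
proof -
  have "(X/nr)/((Y/nr)/2) = (X/nr) * (2 * nr / Y)" by (simp add: divide_divide_eq_right)
  also have "\<dots> = 2 * X / Y" using assms by (simp add: field_simps)
  finally show ?thesis .
qed

lemma alg:
  fixes nr TA TB TB' TC TC' U V M :: real
  assumes nr: "nr > 0" and TA: "TA > 0" and TB: "TB \<ge> 0" and TB': "TB' \<ge> 0" and TC: "TC > 0"
    and U: "U \<ge> 0" and V: "V \<ge> 0" and M: "M \<ge> 0" and Me: "M = TA + TB - TC"
    and TB'e: "TB' = TB + U - V" and TC'e: "TC' = TC - V" and st: "U > 0 \<or> (V > 0 \<and> M > 0)"
  shows "(TA/nr + TB'/nr - TC'/nr) / ((TA/nr + TB'/nr) / 2) > (TA/nr + TB/nr - TC/nr) / ((TA/nr + TB/nr) / 2)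
     \<and> 2 * (TC'/nr) - TA/nr - TB'/nr < 2 * (TC/nr) - TA/nr - TB/nr"
proof
  have e1: "(TA/nr + TB'/nr - TC'/nr) / ((TA/nr + TB'/nr) / 2) = 2 * (TA + TB' - TC') / (TA + TB')"
    using frac_aux[OF nr, of "TA + TB' - TC'" "TA + TB'"] by (simp add: add_divide_distrib diff_divide_distrib)
  have e2: "(TA/nr + TB/nr - TC/nr) / ((TA/nr + TB/nr) / 2) = 2 * (TA + TB - TC) / (TA + TB)"
    using frac_aux[OF nr, of "TA + TB - TC" "TA + TB"] by (simp add: add_divide_distrib diff_divide_distrib)
  have key: "TC' * (TA + TB) < TC * (TA + TB')"
  proof -
    have "TC * (TA + TB') - TC' * (TA + TB) = V * M + TC * U" unfolding Me TB'e TC'e by (simp add: algebra_simps)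
    moreover have "V * M + TC * U > 0"
    proof (cases "U > 0")
      case True then show ?thesis using V M TC by (simp add: add_nonneg_pos)
    next
      case False then have "V > 0" "M > 0" using st by auto
      then show ?thesis using U TC by (simp add: add_pos_nonneg)
    qed
    ultimately show ?thesis by simp
  qed
  have D: "TA + TB > 0" "TA + TB' > 0" using TA TB TB' by auto
  have "2 * (TA + TB - TC) / (TA + TB) < 2 * (TA + TB' - TC') / (TA + TB')"
    using key D by (simp add: divide_simps algebra_simps)
  then show "(TA/nr + TB'/nr - TC'/nr) / ((TA/nr + TB'/nr) / 2) > (TA/nr + TB/nr - TC/nr) / ((TA/nr + TB/nr) / 2)"
    using e1 e2 by simp
  have "2 * TC' - TA - TB' < 2 * TC - TA - TB" using TB'e TC'e st U V by auto
  then show "2 * (TC'/nr) - TA/nr - TB'/nr < 2 * (TC/nr) - TA/nr - TB/nr"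
    using nr by (simp add: divide_simps)
qed


theorem mainTheorem11:
  fixes n :: nat and A B B' :: "nat set set"
  assumes "clustering n A" and "clustering n B" and "clustering n B'"
    and "1 < card A" and "card A < n"
    and "consistent_improvement n A B B'"
  shows "NMI n A B' > NMI n A B \<and> VI n A B' < VI n A B"
proof -
  define S where "S = {1..n}"
  have PA: "partition_on S A" and PB: "partition_on S B" and PB': "partition_on S B'"
    using assms(1-3) by (simp_all add: clustering_def S_def)
  have npos: "n > 0" using assms(4,5) by simp
  have fin: "finite S" and cardS: "card S = n" and Sne: "S \<noteq> {}" using npos by (auto simp: S_def)
  have neq: "B' \<noteq> B" and cons: "\<forall>x\<in>S. \<forall>y\<in>S. x \<noteq> y \<longrightarrow> agrees A B x y \<longrightarrow> agrees A B' x y"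
    using assms(6) by (auto simp: consistent_improvement_def S_def)
  interpret cimp S A B B' using PA PB PB' cons by unfold_locales
  define nr where "nr = real n"
  define L where "L = ln nr"
  define \<alpha> where "\<alpha> x = real (card (cl A x))" for x
  define \<beta> where "\<beta> x = real (card (cl B x))" for x
  define \<beta>' where "\<beta>' x = real (card (cl B' x))" for x
  define \<gamma> where "\<gamma> x = real (card (cl A x \<inter> cl B x))" for x
  define \<gamma>' where "\<gamma>' x = real (card (cl A x \<inter> cl B' x))" for x
  define u where "u x = ln (\<beta> x) - ln (\<gamma> x) - ln (\<beta>' x) + ln (\<gamma>' x)" for x
  define v where "v x = ln (\<gamma>' x) - ln (\<gamma> x)" for x
  define TA where "TA = (\<Sum>x\<in>S. L - ln (\<alpha> x))"
  define TB where "TB = (\<Sum>x\<in>S. L - ln (\<beta> x))"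
  define TB' where "TB' = (\<Sum>x\<in>S. L - ln (\<beta>' x))"
  define TC where "TC = (\<Sum>x\<in>S. L - ln (\<gamma> x))"
  define TC' where "TC' = (\<Sum>x\<in>S. L - ln (\<gamma>' x))"
  define U where "U = (\<Sum>x\<in>S. u x)"
  define V where "V = (\<Sum>x\<in>S. v x)"
  define M where "M = (\<Sum>x\<in>S. ln (real (card S)) + ln (real (card (cl A x \<inter> cl B x))) - ln (real (card (cl A x))) - ln (real (card (cl B x))))"
  have nrpos: "nr > 0" using npos by (simp add: nr_def)
  have HA: "H n A = TA / nr" unfolding H_pt[OF PA[unfolded S_def] npos] TA_def
    by (simp add: sum_divide_distrib S_def nr_def L_def \<alpha>_def)
  have HB: "H n B = TB / nr" unfolding H_pt[OF PB[unfolded S_def] npos] TB_def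
    by (simp add: sum_divide_distrib S_def nr_def L_def \<beta>_def)
  have HB': "H n B' = TB' / nr" unfolding H_pt[OF PB'[unfolded S_def] npos] TB'_def
    by (simp add: sum_divide_distrib S_def nr_def L_def \<beta>'_def)
  have HC: "H2 n A B = TC / nr" unfolding H2_pt[OF PA[unfolded S_def] PB[unfolded S_def] npos] TC_def
    by (simp add: sum_divide_distrib S_def nr_def L_def \<gamma>_def)
  have HC': "H2 n A B' = TC' / nr" unfolding H2_pt[OF PA[unfolded S_def] PB'[unfolded S_def] npos] TC'_def
    by (simp add: sum_divide_distrib S_def nr_def L_def \<gamma>'_def)
  have cfin: "finite (cl P x)" if "partition_on S P" "x \<in> S" for P x using cl_finite[OF that(1) fin that(2)] .
  have Aproper: "card (cl A x) < n" if x: "x \<in> S" for x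
  proof -
    have "cl A x \<noteq> S"
    proof
      assume eq: "cl A x = S"
      have "A \<subseteq> {S}"
      proof
        fix C assume C: "C \<in> A"
        then obtain y where y: "y \<in> C" using partition_onD3[OF PA] by (metis ex_in_conv)
        have yS: "y \<in> S" using C y partition_onD1[OF PA] by blast
        have "C = cl A y" using cl_eq[OF PA C y] by simp
        also have "\<dots> = cl A x" using cl_of[OF PA x] yS eq by simp
        finally show "C \<in> {S}" using eq by simp
      qed
      then have "card A \<le> 1" using card_mono[of "{S}" A] by simp
      then show False using assms(4) by simp
    qed
    then have "cl A x \<subset> S" using cl_sub[OF PA x] by blast
    then show ?thesis using psubset_card_mono[OF fin] cardS by metis
  qed
  have pos: "\<alpha> x > 0 \<and> \<beta> x > 0 \<and> \<beta>' x > 0 \<and> \<gamma> x > 0 \<and> \<gamma>' x > 0" if x: "x \<in> S" for x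
    using cl_in[OF PA x] cl_in[OF PB x] cl_in[OF PB' x] cfin[OF PA x] cfin[OF PB x] cfin[OF PB' x]
    by (auto simp: \<alpha>_def \<beta>_def \<beta>'_def \<gamma>_def \<gamma>'_def card_gt_0_iff)
  have le_n: "\<beta> x \<le> nr" "\<beta>' x \<le> nr" "\<gamma> x \<le> \<alpha> x" "\<alpha> x < nr" if x: "x \<in> S" for x
  proof -
    show "\<beta> x \<le> nr" using card_mono[OF fin cl_sub[OF PB x]] cardS by (simp add: \<beta>_def nr_def)
    show "\<beta>' x \<le> nr" using card_mono[OF fin cl_sub[OF PB' x]] cardS by (simp add: \<beta>'_def nr_def)
    show "\<gamma> x \<le> \<alpha> x" using card_mono[OF cfin[OF PA x], of "cl A x \<inter> cl B x"] by (simp add: \<alpha>_def \<gamma>_def)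
    show "\<alpha> x < nr" using Aproper[OF x] by (simp add: \<alpha>_def nr_def)
  qed
  have pt: "u x \<ge> 0 \<and> v x \<ge> 0 \<and> (u x = 0 \<and> v x = 0 \<longrightarrow> cl B' x = cl B x) \<and> (u x = 0 \<and> v x \<noteq> 0 \<longrightarrow> cl B x \<subseteq> cl A x)"
    if x: "x \<in> S" for x
  proof -
    have sub1: "cl A x \<inter> cl B x \<subseteq> cl A x \<inter> cl B' x" using F1[OF x] by blast
    have fAB: "finite (cl A x \<inter> cl B x)" "finite (cl A x \<inter> cl B' x)" using cfin[OF PA x] by auto
    have g_le_b: "\<gamma> x \<le> \<beta> x" using card_mono[OF cfin[OF PB x], of "cl A x \<inter> cl B x"] by (simp add: \<beta>_def \<gamma>_def)
    have g_le_g': "\<gamma> x \<le> \<gamma>' x" using card_mono[OF fAB(2) sub1] by (simp add: \<gamma>_def \<gamma>'_def)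
    have P: "\<alpha> x > 0" "\<beta> x > 0" "\<beta>' x > 0" "\<gamma> x > 0" "\<gamma>' x > 0" using pos[OF x] by auto
    have v0: "v x \<ge> 0" using g_le_g' P by (simp add: v_def)
    have veq: "v x = 0 \<Longrightarrow> cl A x \<inter> cl B x = cl A x \<inter> cl B' x"
    proof -
      assume "v x = 0"
      then have "\<gamma>' x = \<gamma> x" using P by (simp add: v_def)
      then have "card (cl A x \<inter> cl B' x) = card (cl A x \<inter> cl B x)" by (simp add: \<gamma>_def \<gamma>'_def)
      then show ?thesis using card_subset_eq[OF fAB(2) sub1] by simp
    qed
    show ?thesis
    proof (cases "cl B' x \<subseteq> cl A x")
      case True
      then have e: "cl A x \<inter> cl B' x = cl B' x" by blast
      then have "\<gamma>' x = \<beta>' x" by (simp add: \<gamma>'_def \<beta>'_def)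
      then have ue: "u x = ln (\<beta> x) - ln (\<gamma> x)" by (simp add: u_def)
      have u0: "u x \<ge> 0" using ue g_le_b P by simp
      have c2: "u x = 0 \<Longrightarrow> cl B x \<subseteq> cl A x"
      proof -
        assume "u x = 0"
        then have "\<gamma> x = \<beta> x" using ue P by simp
        then have "card (cl A x \<inter> cl B x) = card (cl B x)" by (simp add: \<gamma>_def \<beta>_def)
        then have "cl A x \<inter> cl B x = cl B x" using card_subset_eq[OF cfin[OF PB x]] by blast
        then show ?thesis by blast
      qed
      have c1: "u x = 0 \<Longrightarrow> v x = 0 \<Longrightarrow> cl B' x = cl B x"
      proof -
        assume a: "u x = 0" "v x = 0"
        have "cl B x \<subseteq> cl A x" using c2 a by simp
        then have "cl B x = cl A x \<inter> cl B x" by blast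
        also have "\<dots> = cl B' x" using veq[OF a(2)] e by simp
        finally show ?thesis by simp
      qed
      show ?thesis using u0 v0 c1 c2 by blast
    next
      case False
      then have sB: "cl B' x \<subseteq> cl B x" using dich[OF x] by blast
      have "cl A x \<inter> cl B' x \<subseteq> cl A x \<inter> cl B x" using sB by blast
      then have e: "cl A x \<inter> cl B' x = cl A x \<inter> cl B x" using sub1 by blast
      then have "v x = 0" by (simp add: v_def \<gamma>_def \<gamma>'_def)
      moreover have ue: "u x = ln (\<beta> x) - ln (\<beta>' x)" using e by (simp add: u_def \<gamma>_def \<gamma>'_def)
      moreover have bb: "\<beta>' x \<le> \<beta> x" using card_mono[OF cfin[OF PB x] sB] by (simp add: \<beta>_def \<beta>'_def)
      moreover have "u x = 0 \<Longrightarrow> cl B' x = cl B x"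
      proof -
        assume "u x = 0"
        then have "\<beta>' x = \<beta> x" using ue P by simp
        then have "card (cl B' x) = card (cl B x)" by (simp add: \<beta>_def \<beta>'_def)
        then show ?thesis using card_subset_eq[OF cfin[OF PB x] sB] by simp
      qed
      ultimately show ?thesis using P by auto
    qed
  qed
  have U0: "U \<ge> 0" using pt by (auto simp: U_def intro: sum_nonneg)
  have V0: "V \<ge> 0" using pt by (auto simp: V_def intro: sum_nonneg)
  have TCe: "TC' = TC - V"
    by (simp add: TC_def TC'_def V_def v_def sum_subtractf[symmetric] algebra_simps)
  have TBe: "TB' = TB + U - V"
    by (simp add: TB_def TB'_def U_def V_def u_def v_def sum_subtractf[symmetric] sum.distrib[symmetric] algebra_simps)
  have Me: "M = TA + TB - TC"
    by (simp add: M_def TA_def TB_def TC_def cardS L_def nr_def \<alpha>_def \<beta>_def \<gamma>_def sum_subtractf[symmetric] sum.distrib[symmetric] algebra_simps)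
  have G: "0 \<le> M \<and> ((\<exists>x0\<in>S. cl B x0 \<subseteq> cl A x0 \<and> card (cl A x0) < card S) \<longrightarrow> 0 < M)"
    unfolding M_def by (rule gibbs[OF PA PB fin Sne])
  have TApos: "TA > 0"
  proof -
    have "(\<Sum>x\<in>S. 0::real) < TA" unfolding TA_def
    proof (rule sum_strict_mono_ex1[OF fin])
      have lt: "ln (\<alpha> x) < L" if "x \<in> S" for x
        using le_n[OF that] pos[OF that] by (simp add: L_def)
      then show "\<forall>x\<in>S. 0 \<le> L - ln (\<alpha> x)" by fastforce
      obtain x where "x \<in> S" using Sne by blast
      then show "\<exists>a\<in>S. 0 < L - ln (\<alpha> a)" using lt by fastforce
    qed
    then show ?thesis by simp
  qed
  have TCpos: "TC > 0"
  proof -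
    have "(\<Sum>x\<in>S. 0::real) < TC" unfolding TC_def
    proof (rule sum_strict_mono_ex1[OF fin])
      have "ln (\<gamma> x) < L" if "x \<in> S" for x
        using le_n[OF that] pos[OF that] by (simp add: L_def)
      then show "\<forall>x\<in>S. 0 \<le> L - ln (\<gamma> x)" by fastforce
      obtain x where "x \<in> S" using Sne by blast
      then show "\<exists>a\<in>S. 0 < L - ln (\<gamma> a)" using \<open>\<And>x. x \<in> S \<Longrightarrow> ln (\<gamma> x) < L\<close> by fastforce
    qed
    then show ?thesis by simp
  qed
  have TB0: "TB \<ge> 0" unfolding TB_def
  proof (rule sum_nonneg)
    fix x assume x: "x \<in> S"
    show "0 \<le> L - ln (\<beta> x)" using le_n(1)[OF x] pos[OF x] by (simp add: L_def)
  qed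
  have TB'0: "TB' \<ge> 0" unfolding TB'_def
  proof (rule sum_nonneg)
    fix x assume x: "x \<in> S"
    show "0 \<le> L - ln (\<beta>' x)" using le_n(2)[OF x] pos[OF x] by (simp add: L_def)
  qed
  have st: "U > 0 \<or> (V > 0 \<and> M > 0)"
  proof (cases "U > 0")
    case True then show ?thesis by simp
  next
    case False
    then have "U = 0" using U0 by simp
    then have u0: "\<forall>x\<in>S. u x = 0" using pt fin by (simp add: U_def sum_nonneg_eq_0_iff)
    show ?thesis
    proof (cases "V = 0")
      case True
      then have v0: "\<forall>x\<in>S. v x = 0" using pt fin by (simp add: V_def sum_nonneg_eq_0_iff)
      have same: "cl B' x = cl B x" if "x \<in> S" for x using pt[OF that] u0 v0 that by blast
      have "B' = B"
      proof
        show "B' \<subseteq> B"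
        proof
          fix C assume C: "C \<in> B'"
          then obtain y where y: "y \<in> C" using partition_onD3[OF PB'] by (metis ex_in_conv)
          have yS: "y \<in> S" using C y partition_onD1[OF PB'] by blast
          have "C = cl B' y" using cl_eq[OF PB' C y] by simp
          then show "C \<in> B" using same[OF yS] cl_in[OF PB yS] by simp
        qed
        show "B \<subseteq> B'"
        proof
          fix C assume C: "C \<in> B"
          then obtain y where y: "y \<in> C" using partition_onD3[OF PB] by (metis ex_in_conv)
          have yS: "y \<in> S" using C y partition_onD1[OF PB] by blast
          have "C = cl B y" using cl_eq[OF PB C y] by simp
          then show "C \<in> B'" using same[OF yS] cl_in[OF PB' yS] by simp
        qed
      qed
      then show ?thesis using neq by simp
    next
      case False
      then have Vp: "V > 0" using V0 by simp
      obtain x0 where x0: "x0 \<in> S" "v x0 \<noteq> 0"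
        using False unfolding V_def by (meson sum.neutral)
      have "cl B x0 \<subseteq> cl A x0" using pt[OF x0(1)] u0 x0 by blast
      then have "M > 0" using G x0(1) Aproper[OF x0(1)] cardS by auto
      then show ?thesis using Vp by simp
    qed
  qed
  have res: "(TA/nr + TB'/nr - TC'/nr) / ((TA/nr + TB'/nr) / 2) > (TA/nr + TB/nr - TC/nr) / ((TA/nr + TB/nr) / 2)
     \<and> 2 * (TC'/nr) - TA/nr - TB'/nr < 2 * (TC/nr) - TA/nr - TB/nr"
    using alg[OF nrpos TApos TB0 TB'0 TCpos U0 V0 _ Me TBe TCe st] G by simp
  show ?thesis using res unfolding NMI_def VI_def MI_def HA HB HB' HC HC' by simp
qed

end
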